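(* For any efficient domination graph $G$, $\gamma_{qtR}(G)\le 3\rho(G)$.
   Context: All graphs are finite, simple and undirected. A set $B\subseteq V(G)$ is a packing if $N[u]\cap N[v]=\emptyset$ for all distinct $u,v\in B$; the packing number $\rho(G)$ is the maximum size of a packing. $G$ is an efficient domination graph if $\rho(G)=\gamma(G)$, where $\gamma(G)$ is the domination number. For $f:V(G)\to\{0,1,2\}$ write $V_i=\{v:f(v)=i\}$; weight $\omega(f)=|V_1|+2|V_2|$. A quasi-total Roman dominating function (QTRDF) is an $f$ such that every vertex labeled $0$ is adjacent to a vertex labeled $2$, and every vertex isolated in the subgraph induced by $V_1\cup V_2$ has label $1$; $\gamma_{qtR}(G)$ is the minimum weight of a QTRDF. *)

theory Defs
  imports Main
begin

definition simple_graph :: "'a set \<Rightarrow> ('a \<Rightarrow> 'a \<Rightarrow> bool) \<Rightarrow> bool" where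
  "simple_graph V E \<longleftrightarrow> finite V \<and> (\<forall>u v. E u v \<longrightarrow> u \<in> V \<and> v \<in> V)
     \<and> (\<forall>u v. E u v \<longrightarrow> E v u) \<and> (\<forall>v. \<not> E v v)"

definition open_nbhd :: "'a set \<Rightarrow> ('a \<Rightarrow> 'a \<Rightarrow> bool) \<Rightarrow> 'a \<Rightarrow> 'a set" where
  "open_nbhd V E v = {u \<in> V. E v u}"

definition closed_nbhd :: "'a set \<Rightarrow> ('a \<Rightarrow> 'a \<Rightarrow> bool) \<Rightarrow> 'a \<Rightarrow> 'a set" where
  "closed_nbhd V E v = insert v (open_nbhd V E v)"

definition packing :: "'a set \<Rightarrow> ('a \<Rightarrow> 'a \<Rightarrow> bool) \<Rightarrow> 'a set \<Rightarrow> bool" where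
  "packing V E B \<longleftrightarrow> B \<subseteq> V \<and>
     (\<forall>u\<in>B. \<forall>v\<in>B. u \<noteq> v \<longrightarrow> closed_nbhd V E u \<inter> closed_nbhd V E v = {})"

definition packing_number :: "'a set \<Rightarrow> ('a \<Rightarrow> 'a \<Rightarrow> bool) \<Rightarrow> nat" where
  "packing_number V E = Max {card B | B. packing V E B}"

definition dominating_set :: "'a set \<Rightarrow> ('a \<Rightarrow> 'a \<Rightarrow> bool) \<Rightarrow> 'a set \<Rightarrow> bool" where
  "dominating_set V E D \<longleftrightarrow> D \<subseteq> V \<and> (\<forall>v\<in>V. v \<in> D \<or> (\<exists>u\<in>D. E v u))"

definition domination_number :: "'a set \<Rightarrow> ('a \<Rightarrow> 'a \<Rightarrow> bool) \<Rightarrow> nat" where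
  "domination_number V E = Min {card D | D. dominating_set V E D}"

definition efficient_domination_graph :: "'a set \<Rightarrow> ('a \<Rightarrow> 'a \<Rightarrow> bool) \<Rightarrow> bool" where
  "efficient_domination_graph V E \<longleftrightarrow> packing_number V E = domination_number V E"

text \<open>Labelling functions f : V -> {0,1,2}; values outside V are irrelevant.
The weight is |V_1| + 2|V_2| = sum of labels over V.\<close>

definition weight :: "'a set \<Rightarrow> ('a \<Rightarrow> nat) \<Rightarrow> nat" where
  "weight V f = (\<Sum>v\<in>V. f v)"

definition qtrdf :: "'a set \<Rightarrow> ('a \<Rightarrow> 'a \<Rightarrow> bool) \<Rightarrow> ('a \<Rightarrow> nat) \<Rightarrow> bool" where
  "qtrdf V E f \<longleftrightarrow> (\<forall>v\<in>V. f v \<le> 2)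
     \<and> (\<forall>v\<in>V. f v = 0 \<longrightarrow> (\<exists>u\<in>V. E v u \<and> f u = 2))
     \<and> (\<forall>v\<in>V. f v \<ge> 1 \<and> \<not> (\<exists>u\<in>V. E v u \<and> f u \<ge> 1) \<longrightarrow> f v = 1)"

definition qt_roman_domination_number :: "'a set \<Rightarrow> ('a \<Rightarrow> 'a \<Rightarrow> bool) \<Rightarrow> nat" where
  "qt_roman_domination_number V E = Min {weight V f | f. qtrdf V E f}"

end

theory Submission
  imports Defs
begin

lemma sum_ind_le:
  assumes "finite V" "A \<subseteq> V"
  shows "(\<Sum>x\<in>V. if x \<in> A then (c::nat) else 0) = c * card A"
proof -
  have "(\<Sum>x\<in>V. if x \<in> A then (c::nat) else 0) = (\<Sum>x\<in>A. c)"
    using assms by (simp add: sum.If_cases Int_absorb1 Int_commute[of V] inf.absorb_iff2)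
  then show ?thesis by simp
qed

theorem mainTheorem9:
  fixes V :: "'a set" and E :: "'a \<Rightarrow> 'a \<Rightarrow> bool"
  assumes "simple_graph V E"
    and "efficient_domination_graph V E"
  shows "qt_roman_domination_number V E \<le> 3 * packing_number V E"
proof -
  have fin: "finite V" and Ein: "\<And>u v. E u v \<Longrightarrow> u \<in> V \<and> v \<in> V"
    using assms(1) unfolding simple_graph_def by auto
  have symE: "\<And>u v. E u v \<Longrightarrow> E v u"
    using assms(1) unfolding simple_graph_def by auto
  let ?DS = "{card D | D. dominating_set V E D}"
  have "dominating_set V E V" unfolding dominating_set_def by auto
  hence ne: "?DS \<noteq> {}" by blast
  have "?DS \<subseteq> {..card V}"
    using fin by (auto simp: dominating_set_def intro: card_mono)
  hence finDS: "finite ?DS" using finite_subset by blast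
  have "domination_number V E \<in> ?DS"
    unfolding domination_number_def using Min_in[OF finDS ne] .
  then obtain D where D: "dominating_set V E D" and cD: "card D = domination_number V E"
    by auto
  have DV: "D \<subseteq> V" using D unfolding dominating_set_def by auto
  define g where "g s = (SOME u. E s u)" for s
  have gE: "E s (g s)" if "\<exists>u. E s u" for s
    unfolding g_def using someI_ex[OF that] .
  define D' where "D' = {s \<in> D. \<exists>u. E s u}"
  define N where "N = g ` D'"
  have NV: "N \<subseteq> V" unfolding N_def D'_def using gE Ein by blast
  have cN: "card N \<le> card D"
    unfolding N_def D'_def using card_image_le[of D' g] DV fin
    by (metis (no_types, lifting) D'_def card_mono finite_subset mem_Collect_eq order_trans subsetI)
  define f where "f x = (if x \<in> D \<and> (\<exists>u. E x u) then 2 else if x \<in> D \<or> x \<in> N then 1 else (0::nat))" for x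
  have q: "qtrdf V E f"
    unfolding qtrdf_def
  proof (intro conjI ballI impI)
    fix v assume "v \<in> V" show "f v \<le> 2" unfolding f_def by auto
  next
    fix v assume v: "v \<in> V" "f v = 0"
    hence "v \<notin> D" unfolding f_def by (auto split: if_splits)
    then obtain u where u: "u \<in> D" "E v u" using D v unfolding dominating_set_def by blast
    hence "f u = 2" unfolding f_def using symE by auto
    thus "\<exists>u\<in>V. E v u \<and> f u = 2" using u Ein by blast
  next
    fix v assume v: "v \<in> V" "1 \<le> f v \<and> \<not> (\<exists>u\<in>V. E v u \<and> 1 \<le> f u)"
    show "f v = 1"
    proof (rule ccontr)
      assume "f v \<noteq> 1"
      hence "v \<in> D" "\<exists>u. E v u" using v unfolding f_def by (auto split: if_splits)
      hence "g v \<in> N" "E v (g v)" unfolding N_def D'_def using gE by auto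
      hence "1 \<le> f (g v)" "g v \<in> V" unfolding f_def using Ein by auto
      thus False using v \<open>E v (g v)\<close> by blast
    qed
  qed
  have "weight V f \<le> (\<Sum>x\<in>V. (if x \<in> D then 2 else 0) + (if x \<in> N then 1 else 0))"
    unfolding weight_def by (rule sum_mono) (auto simp: f_def)
  also have "\<dots> = 2 * card D + 1 * card N"
    by (simp add: sum.distrib sum_ind_le[OF fin DV] sum_ind_le[OF fin NV])
  also have "\<dots> \<le> 3 * card D" using cN by simp
  finally have w: "weight V f \<le> 3 * card D" .
  let ?Q = "{weight V f | f. qtrdf V E f}"
  have "?Q \<subseteq> {..2 * card V}"
  proof
    fix w assume "w \<in> ?Q"
    then obtain h where h: "w = weight V h" "qtrdf V E h" by auto
    have "weight V h \<le> (\<Sum>x\<in>V. 2)" unfolding weight_def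
      using h(2) by (intro sum_mono) (auto simp: qtrdf_def)
    thus "w \<in> {..2 * card V}" using h by simp
  qed
  hence "finite ?Q" using finite_subset by blast
  moreover have "weight V f \<in> ?Q" using q by blast
  ultimately have "qt_roman_domination_number V E \<le> weight V f"
    unfolding qt_roman_domination_number_def by (rule Min_le)
  also have "\<dots> \<le> 3 * packing_number V E"
    using w cD assms(2) unfolding efficient_domination_graph_def by simp
  finally show ?thesis .
qed

end
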